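(* Let $\lambda\geqslant1$ be a cardinal, $n$ a positive integer, and $\tau$ any (Hausdorff) inverse semigroup topology on $\mathscr{I}_\lambda^n$ (i.e. a topology making multiplication and inversion continuous). Then $(\mathscr{I}_\lambda^n,\tau)$ is absolutely $H$-closed in the class of topological inverse semigroups; that is, for every topological inverse semigroup $T$ and every continuous homomorphism $h\colon(\mathscr{I}_\lambda^n,\tau)\to T$, the image $(\mathscr{I}_\lambda^n)h$ is closed in every topological inverse semigroup containing it as a subsemigroup.
   Context: All topological spaces are Hausdorff. A topological inverse semigroup is an inverse semigroup with a topology making multiplication and inversion continuous. For a set $X$ of cardinality $\lambda$, $\mathscr{I}(X)$ is the semigroup of all partial one-to-one maps of $X$ (including the empty map) under composition; the rank of $\alpha$ is $|\operatorname{ran}\alpha|$, and $\mathscr{I}_\lambda^n=\{\alpha\in\mathscr{I}(X):\operatorname{rank}\alpha\leqslant n\}$. Given a class $\mathfrak{S}$ of topological semigroups, $S\in\mathfrak{S}$ is $H$-closed in $\mathfrak{S}$ if it is closed in every $T\in\mathfrak{S}$ containing $S$ as a subsemigroup, and absolutely $H$-closed in $\mathfrak{S}$ if every continuous homomorphic image of $S$ in any member of $\mathfrak{S}$ is $H$-closed in $\mathfrak{S}$. *)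

theory Defs
  imports "HOL-Analysis.Analysis"
begin

definition inverse_semigroup :: "'a set \<Rightarrow> ('a \<Rightarrow> 'a \<Rightarrow> 'a) \<Rightarrow> bool" where
  "inverse_semigroup S m \<longleftrightarrow>
     (\<forall>x\<in>S. \<forall>y\<in>S. m x y \<in> S) \<and>
     (\<forall>x\<in>S. \<forall>y\<in>S. \<forall>z\<in>S. m (m x y) z = m x (m y z)) \<and>
     (\<forall>x\<in>S. \<exists>!y. y \<in> S \<and> m (m x y) x = x \<and> m (m y x) y = y)"

definition sinv :: "'a set \<Rightarrow> ('a \<Rightarrow> 'a \<Rightarrow> 'a) \<Rightarrow> 'a \<Rightarrow> 'a" where
  "sinv S m x = (THE y. y \<in> S \<and> m (m x y) x = x \<and> m (m y x) y = y)"

definition top_inv_semigroup :: "'a set \<Rightarrow> ('a \<Rightarrow> 'a \<Rightarrow> 'a) \<Rightarrow> 'a topology \<Rightarrow> bool" where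
  "top_inv_semigroup S m T \<longleftrightarrow>
     inverse_semigroup S m \<and> topspace T = S \<and> Hausdorff_space T \<and>
     continuous_map (prod_topology T T) T (\<lambda>(x, y). m x y) \<and>
     continuous_map T T (sinv S m)"

definition H_closed_TIS :: "'c itself \<Rightarrow> 'a set \<Rightarrow> ('a \<Rightarrow> 'a \<Rightarrow> 'a) \<Rightarrow> 'a topology \<Rightarrow> bool" where
  "H_closed_TIS (_ :: 'c itself) S m T \<longleftrightarrow>
     top_inv_semigroup S m T \<and>
     (\<forall>(U :: 'c set) mU TU e.
        top_inv_semigroup U mU TU \<and> e ` S \<subseteq> U \<and> inj_on e S \<and>
        (\<forall>x\<in>S. \<forall>y\<in>S. e (m x y) = mU (e x) (e y)) \<and>
        homeomorphic_map T (subtopology TU (e ` S)) e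
        \<longrightarrow> closedin TU (e ` S))"

definition partial_inj :: "'a set \<Rightarrow> ('a \<rightharpoonup> 'a) set" where
  "partial_inj X = {\<alpha>. dom \<alpha> \<subseteq> X \<and> ran \<alpha> \<subseteq> X \<and> inj_on \<alpha> (dom \<alpha>)}"

text \<open>Composition, written left to right: (\<alpha> \<cdot> \<beta>) applies \<alpha> first, then \<beta>.\<close>
definition pmult :: "('a \<rightharpoonup> 'a) \<Rightarrow> ('a \<rightharpoonup> 'a) \<Rightarrow> ('a \<rightharpoonup> 'a)" where
  "pmult \<alpha> \<beta> = \<beta> \<circ>\<^sub>m \<alpha>"

definition I_rank :: "'a set \<Rightarrow> nat \<Rightarrow> ('a \<rightharpoonup> 'a) set" where
  "I_rank X n = {\<alpha> \<in> partial_inj X. finite (ran \<alpha>) \<and> card (ran \<alpha>) \<le> n}"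

end

theory Submission
  imports Defs
begin


definition idm :: "'a set \<Rightarrow> ('a \<rightharpoonup> 'a)" where
  "idm Y = (\<lambda>x. if x \<in> Y then Some x else None)"

definition pinv :: "('a \<rightharpoonup> 'a) \<Rightarrow> ('a \<rightharpoonup> 'a)" where
  "pinv a = (\<lambda>y. if y \<in> ran a then Some (SOME x. a x = Some y) else None)"

lemma dom_idm[simp]: "dom (idm Y) = Y" by (auto simp: idm_def dom_def)
lemma ran_idm[simp]: "ran (idm Y) = Y" by (auto simp: idm_def ran_def)

lemma pmult_idm_idm: "pmult (idm Y) (idm Z) = idm (Y \<inter> Z)"
  by (auto simp: pmult_def idm_def map_comp_def fun_eq_iff)

lemma pinv_some: "a x = Some y \<Longrightarrow> inj_on a (dom a) \<Longrightarrow> pinv a y = Some x"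
proof -
  assume a: "a x = Some y" and inj: "inj_on a (dom a)"
  have r: "y \<in> ran a" using a by (auto simp: ran_def)
  have "a (SOME x. a x = Some y) = Some y" using a by (metis (mono_tags) someI)
  then have "(SOME x. a x = Some y) = x" using inj a by (metis domI inj_on_contraD)
  then show ?thesis using r by (simp add: pinv_def)
qed

lemma dom_pinv: "dom (pinv a) = ran a" by (auto simp: pinv_def dom_def split: if_splits)

lemma pinv_SomeD: "pinv a y = Some x \<Longrightarrow> a x = Some y"
proof -
  assume h: "pinv a y = Some x"
  then have r: "y \<in> ran a" by (auto simp: pinv_def split: if_splits)
  then have ex: "\<exists>x. a x = Some y" by (auto simp: ran_def)
  from h r have "x = (SOME x. a x = Some y)" by (simp add: pinv_def)
  then show ?thesis using someI_ex[OF ex] by simp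
qed

lemma ran_pinv: "inj_on a (dom a) \<Longrightarrow> ran (pinv a) = dom a"
proof
  assume inj: "inj_on a (dom a)"
  show "ran (pinv a) \<subseteq> dom a"
  proof
    fix z assume "z \<in> ran (pinv a)"
    then obtain y where "pinv a y = Some z" by (auto simp: ran_def)
    then have "a z = Some y" by (rule pinv_SomeD)
    then show "z \<in> dom a" by blast
  qed
  show "dom a \<subseteq> ran (pinv a)"
  proof
    fix x assume "x \<in> dom a"
    then obtain y where "a x = Some y" by blast
    then have "pinv a y = Some x" using inj by (rule pinv_some)
    then show "x \<in> ran (pinv a)" by (auto simp: ran_def)
  qed
qed

lemma pmult_pinv1: "inj_on a (dom a) \<Longrightarrow> pmult a (pinv a) = idm (dom a)"
proof
  fix x assume inj: "inj_on a (dom a)"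
  show "pmult a (pinv a) x = idm (dom a) x"
  proof (cases "a x")
    case None then show ?thesis by (simp add: pmult_def idm_def domIff)
  next
    case (Some y)
    then have "pinv a y = Some x" using inj by (rule pinv_some)
    then show ?thesis using Some by (simp add: pmult_def idm_def domIff)
  qed
qed

lemma pmult_pinv2: "pmult (pinv a) a = idm (ran a)"
proof
  fix y
  show "pmult (pinv a) a y = idm (ran a) y"
  proof (cases "pinv a y")
    case None
    then have "y \<notin> ran a" using dom_pinv by (metis domIff)
    then show ?thesis using None by (simp add: pmult_def idm_def)
  next
    case (Some x)
    then have "a x = Some y" by (rule pinv_SomeD)
    then have "y \<in> ran a" by (auto simp: ran_def)
    then show ?thesis using Some \<open>a x = Some y\<close> by (simp add: pmult_def idm_def)
  qed
qed

lemma pmult_idm_left: "dom a \<subseteq> Y \<Longrightarrow> pmult (idm Y) a = a"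
proof
  fix x assume d: "dom a \<subseteq> Y"
  show "pmult (idm Y) a x = a x"
  proof (cases "x \<in> Y")
    case True then show ?thesis by (simp add: pmult_def idm_def)
  next
    case False then have "a x = None" using d by blast
    then show ?thesis using False by (simp add: pmult_def idm_def)
  qed
qed

lemma pmult_idm_right: "ran a \<subseteq> Z \<Longrightarrow> pmult a (idm Z) = a"
proof
  fix x assume r: "ran a \<subseteq> Z"
  show "pmult a (idm Z) x = a x"
  proof (cases "a x")
    case None then show ?thesis by (simp add: pmult_def)
  next
    case (Some y) then have "y \<in> Z" using r by (auto simp: ran_def)
    then show ?thesis using Some by (simp add: pmult_def idm_def)
  qed
qed

lemma img: "a ` dom a = Some ` ran a"
proof
  show "a ` dom a \<subseteq> Some ` ran a" by (auto simp: ran_def)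
  show "Some ` ran a \<subseteq> a ` dom a"
  proof
    fix z assume "z \<in> Some ` ran a"
    then obtain y x where "z = Some y" "a x = Some y" by (auto simp: ran_def)
    then show "z \<in> a ` dom a" by (metis domI imageI)
  qed
qed

lemma card_dom_ran: "inj_on a (dom a) \<Longrightarrow> card (dom a) = card (ran a)"
proof -
  assume inj: "inj_on a (dom a)"
  have "a ` dom a = Some ` ran a" by (rule img)
  then have "card (dom a) = card (Some ` ran a)" using card_image[OF inj] by simp
  also have "\<dots> = card (ran a)" by (simp add: card_image)
  finally show ?thesis .
qed

lemma finite_dom_ran: "inj_on a (dom a) \<Longrightarrow> finite (ran a) \<Longrightarrow> finite (dom a)"
proof -
  assume inj: "inj_on a (dom a)" and f: "finite (ran a)"
  have "finite (a ` dom a)" using img[of a] f by simp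
  then show ?thesis using inj by (rule finite_imageD)
qed

lemma pinv_in: "a \<in> I_rank X n \<Longrightarrow> pinv a \<in> I_rank X n"
proof -
  assume a: "a \<in> I_rank X n"
  then have inj: "inj_on a (dom a)" and d: "dom a \<subseteq> X" and r: "ran a \<subseteq> X"
    and f: "finite (ran a)" and c: "card (ran a) \<le> n" by (auto simp: I_rank_def partial_inj_def)
  have "inj_on (pinv a) (dom (pinv a))"
  proof (rule inj_onI)
    fix y1 y2 assume y1: "y1 \<in> dom (pinv a)" and "y2 \<in> dom (pinv a)" and e: "pinv a y1 = pinv a y2"
    then obtain x1 where x1: "pinv a y1 = Some x1" by auto
    then have "a x1 = Some y1" by (rule pinv_SomeD)
    moreover have "a x1 = Some y2" using x1 e by (metis pinv_SomeD)
    ultimately show "y1 = y2" by simp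
  qed
  moreover have "finite (ran (pinv a))" "card (ran (pinv a)) \<le> n"
    using finite_dom_ran[OF inj f] card_dom_ran[OF inj] c by (simp_all add: ran_pinv[OF inj])
  ultimately show ?thesis using d r
    unfolding I_rank_def partial_inj_def by (simp add: dom_pinv ran_pinv[OF inj])
qed

lemma idm_in: "Y \<subseteq> X \<Longrightarrow> finite Y \<Longrightarrow> card Y \<le> n \<Longrightarrow> idm Y \<in> I_rank X n"
proof -
  have "inj_on (idm Y) (dom (idm Y))" by (auto simp: inj_on_def idm_def split: if_splits)
  then show "Y \<subseteq> X \<Longrightarrow> finite Y \<Longrightarrow> card Y \<le> n \<Longrightarrow> idm Y \<in> I_rank X n"
    by (simp add: I_rank_def partial_inj_def)
qed

lemma pmult_in: "a \<in> I_rank X n \<Longrightarrow> b \<in> I_rank X n \<Longrightarrow> pmult a b \<in> I_rank X n"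
proof -
  assume a: "a \<in> I_rank X n" and b: "b \<in> I_rank X n"
  have rs: "ran (pmult a b) \<subseteq> ran b"
    by (auto simp: pmult_def ran_def map_comp_def split: option.splits)
  have ds: "dom (pmult a b) \<subseteq> dom a"
    by (auto simp: pmult_def dom_def map_comp_def split: option.splits)
  have "inj_on (pmult a b) (dom (pmult a b))"
    using a b unfolding I_rank_def partial_inj_def inj_on_def pmult_def map_comp_def
    by (auto split: option.splits) (metis domI option.inject)
  then show ?thesis using a b rs ds
    by (auto simp: I_rank_def partial_inj_def intro: finite_subset card_mono order_trans)
qed

lemma finite_maps_sub: "finite Y \<Longrightarrow> finite Z \<Longrightarrow> finite {b. dom b \<subseteq> Y \<and> ran b \<subseteq> Z}"
proof -
  assume fy: "finite Y" and fz: "finite Z"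
  have "{b. dom b \<subseteq> Y \<and> ran b \<subseteq> Z} = (\<Union>A\<in>Pow Y. {m. dom m = A \<and> ran m \<subseteq> Z})" by auto
  moreover have "finite (\<Union>A\<in>Pow Y. {m. dom m = A \<and> ran m \<subseteq> Z})"
    using fy fz by (auto intro!: finite_set_of_finite_maps dest: finite_subset)
  ultimately show ?thesis by simp
qed

lemma sw_dom: "dom (pmult (pmult (idm Y) a) b) \<subseteq> Y"
proof
  fix x assume "x \<in> dom (pmult (pmult (idm Y) a) b)"
  then show "x \<in> Y" by (cases "x \<in> Y") (auto simp: pmult_def idm_def map_comp_def dom_def)
qed

lemma sw_ran: "ran (pmult c (idm Z)) \<subseteq> Z"
proof
  fix y assume "y \<in> ran (pmult c (idm Z))"
  then obtain x where "(idm Z \<circ>\<^sub>m c) x = Some y" by (auto simp: pmult_def ran_def)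
  then show "y \<in> Z" by (auto simp: idm_def map_comp_def split: option.splits if_splits)
qed



lemma sinv_props:
  assumes "inverse_semigroup S m" "x \<in> S"
  shows "sinv S m x \<in> S \<and> m (m x (sinv S m x)) x = x \<and> m (m (sinv S m x) x) (sinv S m x) = sinv S m x"
proof -
  have "\<exists>!y. y \<in> S \<and> m (m x y) x = x \<and> m (m y x) y = y"
    using assms(1,2) unfolding inverse_semigroup_def by (rule bspec[OF conjunct2[OF conjunct2]])
  then show ?thesis unfolding sinv_def by (rule theI')
qed

lemma sinv_eq:
  assumes "inverse_semigroup S m" "x \<in> S" "y \<in> S" "m (m x y) x = x" "m (m y x) y = y"
  shows "sinv S m x = y"
proof -
  have "\<exists>!y. y \<in> S \<and> m (m x y) x = x \<and> m (m y x) y = y"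
    using assms(1,2) unfolding inverse_semigroup_def by (rule bspec[OF conjunct2[OF conjunct2]])
  then show ?thesis unfolding sinv_def by (rule the1_equality) (intro conjI assms(3-5))
qed

lemma hsep: "Hausdorff_space T \<Longrightarrow> x \<in> topspace T \<Longrightarrow> y \<in> topspace T \<Longrightarrow> x \<noteq> y \<Longrightarrow>
   \<exists>G1 G2. openin T G1 \<and> openin T G2 \<and> x \<in> G1 \<and> y \<in> G2 \<and> disjnt G1 G2"
  unfolding Hausdorff_space_def by blast

lemma closure_pt: "x \<in> X closure_of S \<Longrightarrow> openin X G \<Longrightarrow> x \<in> G \<Longrightarrow> \<exists>y\<in>S. y \<in> G"
  by (auto simp: in_closure_of)

lemma not_closure_pt: "x \<notin> X closure_of S \<Longrightarrow> x \<in> topspace X \<Longrightarrow> \<exists>W. openin X W \<and> x \<in> W \<and> (\<forall>y\<in>S. y \<notin> W)"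
  by (auto simp: in_closure_of)

lemma prod_nbhd:
  assumes "openin (prod_topology X Y) S" "(a, b) \<in> S"
  obtains U V where "openin X U" "openin Y V" "a \<in> U" "b \<in> V" "U \<times> V \<subseteq> S"
proof -
  have "\<forall>x y. (x,y) \<in> S \<longrightarrow> (\<exists>U V. openin X U \<and> openin Y V \<and> x \<in> U \<and> y \<in> V \<and> U \<times> V \<subseteq> S)"
    using iffD1[OF openin_prod_topology_alt assms(1)] .
  then have "(a,b) \<in> S \<longrightarrow> (\<exists>U V. openin X U \<and> openin Y V \<and> a \<in> U \<and> b \<in> V \<and> U \<times> V \<subseteq> S)"
    by (elim allE)
  then have "\<exists>U V. openin X U \<and> openin Y V \<and> a \<in> U \<and> b \<in> V \<and> U \<times> V \<subseteq> S" using assms(2) by (rule mp)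
  then obtain U V where "openin X U \<and> openin Y V \<and> a \<in> U \<and> b \<in> V \<and> U \<times> V \<subseteq> S" by (elim exE)
  then show ?thesis using that by (elim conjE)
qed

lemma semilattice_closed:
  assumes T: "top_inv_semigroup U m T"
  and EU: "E \<subseteq> U"
  and cl: "\<And>c d. c \<in> E \<Longrightarrow> d \<in> E \<Longrightarrow> m c d \<in> E \<and> m c d = m d c"
  and idem: "\<And>c. c \<in> E \<Longrightarrow> m c c = c"
  and fin: "\<And>c. c \<in> E \<Longrightarrow> finite {d\<in>E. m d c = d} \<and> card {d\<in>E. m d c = d} \<le> N"
  shows "T closure_of E \<subseteq> E"
proof -
  have top: "topspace T = U" and H: "Hausdorff_space T"
    and cm: "continuous_map (prod_topology T T) T (\<lambda>(x, y). m x y)"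
    and IS: "inverse_semigroup U m"
    using T by (auto simp: top_inv_semigroup_def)
  have assoc: "\<And>x y z. x \<in> U \<Longrightarrow> y \<in> U \<Longrightarrow> z \<in> U \<Longrightarrow> m (m x y) z = m x (m y z)"
    using IS by (auto simp: inverse_semigroup_def)
  define dn where "dn c = {d\<in>E. m d c = d}" for c
  have dnfin: "\<And>c. c \<in> E \<Longrightarrow> finite (dn c)" using fin by (simp add: dn_def)
  have cdn: "\<And>c. c \<in> E \<Longrightarrow> c \<in> dn c" using idem by (simp add: dn_def)
  have sub: "dn (m c d) \<subseteq> dn c" if c: "c \<in> E" and d: "d \<in> E" for c d
  proof
    fix y assume "y \<in> dn (m c d)"
    then have y: "y \<in> E" and yy: "m y (m c d) = y" by (auto simp: dn_def)
    have U: "y \<in> U" "c \<in> U" "d \<in> U" "m c d \<in> U" using y c d cl EU by auto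
    have "m y c = m (m y (m c d)) c" using yy by simp
    also have "\<dots> = m y (m (m c d) c)" using U assoc by simp
    also have "m (m c d) c = m (m d c) c" using cl[OF c d] by simp
    also have "\<dots> = m d (m c c)" using U assoc by simp
    also have "\<dots> = m d c" using idem c by simp
    also have "\<dots> = m c d" using cl[OF c d] by simp
    finally have "m y c = m y (m c d)" .
    then show "y \<in> dn c" using yy y by (simp add: dn_def)
  qed
  have sq: "continuous_map T T (\<lambda>y. m y y)"
  proof -
    have "continuous_map T (prod_topology T T) (\<lambda>y. (y, y))"
      by (intro continuous_map_pairedI continuous_map_id[unfolded id_def])
    from continuous_map_compose[OF this cm] show ?thesis by (simp add: o_def)
  qed
  have idemcl: "m x x = x" if xc: "x \<in> T closure_of E" for x
  proof (rule ccontr)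
    assume ne: "m x x \<noteq> x"
    have xU: "x \<in> topspace T" using xc in_closure_of by fast
    have mU: "m x x \<in> topspace T" using sq xU by (auto simp: continuous_map_def Pi_iff)
    obtain G1 G2 where G: "openin T G1" "openin T G2" "m x x \<in> G1" "x \<in> G2" "disjnt G1 G2"
      using hsep[OF H mU xU ne] by blast
    have "openin T ({y \<in> topspace T. m y y \<in> G1} \<inter> G2)"
      using openin_continuous_map_preimage[OF sq G(1)] G(2) by blast
    moreover have "x \<in> {y \<in> topspace T. m y y \<in> G1} \<inter> G2" using xU G by simp
    ultimately obtain e where "e \<in> E" "e \<in> {y \<in> topspace T. m y y \<in> G1} \<inter> G2"
      using closure_pt[OF xc] by blast
    then show False using idem G(5) by (auto simp: disjnt_def)
  qed
  have key: "\<forall>x. x \<in> T closure_of {c\<in>E. card (dn c) \<le> k} \<longrightarrow> x \<in> E" for k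
  proof (induction k)
    case 0
    have "{c\<in>E. card (dn c) \<le> 0} = {}"
      using cdn dnfin by (auto simp: card_eq_0_iff)
    then show ?case by (metis closure_of_empty empty_iff)
  next
    case (Suc k)
    show ?case
    proof (intro allI impI)
      fix x assume x: "x \<in> T closure_of {c\<in>E. card (dn c) \<le> Suc k}"
      show "x \<in> E"
      proof (cases "x \<in> T closure_of {c\<in>E. card (dn c) \<le> k}")
        case True with Suc.IH show ?thesis by blast
      next
        case False
        have xU: "x \<in> topspace T" using x in_closure_of by fast
        then obtain W where W: "openin T W" "x \<in> W" and Wk: "\<And>y. y \<in> E \<Longrightarrow> card (dn y) \<le> k \<Longrightarrow> y \<notin> W"
          using not_closure_pt[OF False xU] by blast
        have "openin (prod_topology T T) {z \<in> topspace (prod_topology T T). (\<lambda>(x,y). m x y) z \<in> W}"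
          using cm W(1) by (rule openin_continuous_map_preimage)
        moreover have "(x, x) \<in> {z \<in> topspace (prod_topology T T). (\<lambda>(x,y). m x y) z \<in> W}"
        proof -
          have "m x x = x"
          proof -
            have "x \<in> T closure_of E"
              using x closure_of_mono[of "{c\<in>E. card (dn c) \<le> Suc k}" E T] by blast
            then show ?thesis by (rule idemcl)
          qed
          then show ?thesis using xU W by (simp add: topspace_prod_topology)
        qed
        ultimately obtain V1 V2 where V: "openin T V1" "openin T V2" "x \<in> V1" "x \<in> V2"
          and VV: "V1 \<times> V2 \<subseteq> {z \<in> topspace (prod_topology T T). (\<lambda>(x,y). m x y) z \<in> W}"
          by (rule prod_nbhd)
        define V where "V = V1 \<inter> V2"
        have Vo: "openin T V" "x \<in> V" using V by (auto simp: V_def)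
        obtain c where c0: "c \<in> {c\<in>E. card (dn c) \<le> Suc k}" "c \<in> V"
          using closure_pt[OF x Vo] by blast
        then have c: "c \<in> E" "card (dn c) \<le> Suc k" "c \<in> V" by simp_all
        show "x \<in> E"
        proof (rule ccontr)
          assume "x \<notin> E"
          then have "x \<noteq> c" using c by blast
          have cT: "c \<in> topspace T" using c EU top by auto
          obtain G1 G2 where G: "openin T G1" "openin T G2" "x \<in> G1" "c \<in> G2" "disjnt G1 G2"
            using hsep[OF H xU cT \<open>x \<noteq> c\<close>] by blast
          have "openin T (V \<inter> G1)" "x \<in> V \<inter> G1" using G Vo by auto
          then obtain d where d0: "d \<in> {c\<in>E. card (dn c) \<le> Suc k}" "d \<in> V \<inter> G1"
            using closure_pt[OF x] by blast
          then have d: "d \<in> E" "card (dn d) \<le> Suc k" "d \<in> V \<inter> G1" by simp_all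
          have "d \<noteq> c" using d(3) G(4,5) by (auto simp: disjnt_def)
          have "(c,d) \<in> V1 \<times> V2" using c(3) d(3) by (simp add: V_def)
          then have "(c,d) \<in> {z \<in> topspace (prod_topology T T). (\<lambda>(x,y). m x y) z \<in> W}" by (rule subsetD[OF VV])
          then have cdW: "m c d \<in> W" by simp
          have cdE: "m c d \<in> E" using cl[OF c(1) d(1)] by (rule conjunct1)
          have gt: "card (dn (m c d)) > k" using Wk[OF cdE] cdW by (meson not_le)
          have "card (dn (m c d)) = card (dn c)"
            using gt c(2) card_mono[OF dnfin[OF c(1)] sub[OF c(1) d(1)]] by linarith
          then have eqc: "dn (m c d) = dn c"
            using card_subset_eq[OF dnfin[OF c(1)] sub[OF c(1) d(1)]] by simp
          have eqd: "dn (m c d) = dn d"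
          proof -
            have "m c d = m d c" using cl[OF c(1) d(1)] by (rule conjunct2)
            then have s: "dn (m c d) \<subseteq> dn d" using sub[OF d(1) c(1)] by simp
            have "card (dn (m c d)) = card (dn d)" using gt d(2) card_mono[OF dnfin[OF d(1)] s]
              by linarith
            then show ?thesis using card_subset_eq[OF dnfin[OF d(1)] s] by simp
          qed
          have Uc: "c \<in> U" "d \<in> U" using c d EU by auto
          have cm': "m c d = m d c" using cl[OF c(1) d(1)] by (rule conjunct2)
          have "c \<in> dn (m c d)" unfolding eqc by (rule cdn[OF c(1)])
          then have A1: "m c (m c d) = c" by (simp add: dn_def)
          have B1: "m c (m c d) = m c d"
          proof -
            have "m c (m c d) = m (m c c) d" using assoc[OF Uc(1) Uc(1) Uc(2)] by (rule sym)
            also have "\<dots> = m c d" by (simp only: idem[OF c(1)])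
            finally show ?thesis .
          qed
          have 1: "c = m c d" using trans[OF sym[OF A1] B1] .
          have "d \<in> dn (m c d)" unfolding eqd by (rule cdn[OF d(1)])
          then have A2: "m d (m c d) = d" by (simp add: dn_def)
          have B2: "m d (m c d) = m c d"
          proof -
            have "m d (m c d) = m d (m d c)" using cm' by (rule arg_cong[where f="m d"])
            also have "\<dots> = m (m d d) c" using assoc[OF Uc(2) Uc(2) Uc(1)] by (rule sym)
            also have "\<dots> = m d c" by (simp only: idem[OF d(1)])
            also have "\<dots> = m c d" by (rule sym[OF cm'])
            finally show ?thesis .
          qed
          have 2: "d = m c d" using trans[OF sym[OF A2] B2] .
          have "d = c" using trans[OF 2 sym[OF 1]] .
          with \<open>d \<noteq> c\<close> show False by (rule notE)
        qed
      qed
    qed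
  qed
  have "E \<subseteq> {c\<in>E. card (dn c) \<le> N}"
  proof
    fix c assume "c \<in> E"
    then show "c \<in> {c\<in>E. card (dn c) \<le> N}" using fin[of c] by (simp add: dn_def)
  qed
  then have "T closure_of E \<subseteq> T closure_of {c\<in>E. card (dn c) \<le> N}" by (rule closure_of_mono)
  then show ?thesis
  proof -
    assume sub2: "T closure_of E \<subseteq> T closure_of {c\<in>E. card (dn c) \<le> N}"
    show ?thesis
    proof
      fix x assume "x \<in> T closure_of E"
      then have "x \<in> T closure_of {c\<in>E. card (dn c) \<le> N}" by (rule subsetD[OF sub2])
      moreover have "x \<in> T closure_of {c\<in>E. card (dn c) \<le> N} \<longrightarrow> x \<in> E" using key[of N] by (rule spec)
      ultimately show "x \<in> E" by (rule rev_mp)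
    qed
  qed
qed


lemma cont_mult_pair:
  assumes cm: "continuous_map (prod_topology T T) T (\<lambda>(x, y). m x y)"
    and f: "continuous_map T T f" and g: "continuous_map T T g"
  shows "continuous_map T T (\<lambda>y. m (f y) (g y))"
proof -
  have "continuous_map T (prod_topology T T) (\<lambda>y. (f y, g y))"
    using f g by (rule continuous_map_pairedI)
  from continuous_map_compose[OF this cm] show ?thesis by (simp add: o_def)
qed

lemma hom_closed:
  assumes T: "top_inv_semigroup U m T"
    and gU: "g ` I_rank X n \<subseteq> U"
    and hom: "\<And>x y. x \<in> I_rank X n \<Longrightarrow> y \<in> I_rank X n \<Longrightarrow> g (pmult x y) = m (g x) (g y)"
  shows "closedin T (g ` I_rank X n)"
proof -
  define I where "I = I_rank X n"
  have top: "topspace T = U" and H: "Hausdorff_space T"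
    and cm: "continuous_map (prod_topology T T) T (\<lambda>(x, y). m x y)"
    and ci: "continuous_map T T (sinv U m)"
    and IS: "inverse_semigroup U m"
    using T by (auto simp: top_inv_semigroup_def)
  have assoc: "\<And>x y z. x \<in> U \<Longrightarrow> y \<in> U \<Longrightarrow> z \<in> U \<Longrightarrow> m (m x y) z = m x (m y z)"
    using IS by (auto simp: inverse_semigroup_def)
  have gI: "\<And>a. a \<in> I \<Longrightarrow> g a \<in> U" using gU by (auto simp: I_def)
  have homI: "\<And>x y. x \<in> I \<Longrightarrow> y \<in> I \<Longrightarrow> g (pmult x y) = m (g x) (g y)" using hom by (simp add: I_def)
  have pI: "\<And>a b. a \<in> I \<Longrightarrow> b \<in> I \<Longrightarrow> pmult a b \<in> I" by (simp add: I_def pmult_in)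
  have invI: "\<And>a. a \<in> I \<Longrightarrow> pinv a \<in> I" by (simp add: I_def pinv_in)
  have injI: "\<And>a. a \<in> I \<Longrightarrow> inj_on a (dom a)" by (simp add: I_def I_rank_def partial_inj_def)
  have domI: "\<And>a. a \<in> I \<Longrightarrow> idm (dom a) \<in> I"
  proof -
    fix a assume a: "a \<in> I"
    then have "dom a \<subseteq> X" "finite (ran a)" "card (ran a) \<le> n" "inj_on a (dom a)"
      by (auto simp: I_def I_rank_def partial_inj_def)
    then show "idm (dom a) \<in> I" unfolding I_def
      by (intro idm_in) (simp_all add: finite_dom_ran card_dom_ran)
  qed
  have ranI: "\<And>a. a \<in> I \<Longrightarrow> idm (ran a) \<in> I"
  proof -
    fix a assume a: "a \<in> I"
    then have "ran a \<subseteq> X" "finite (ran a)" "card (ran a) \<le> n"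
      by (auto simp: I_def I_rank_def partial_inj_def)
    then show "idm (ran a) \<in> I" unfolding I_def by (rule idm_in)
  qed
  have sg: "sinv U m (g a) = g (pinv a)" if a: "a \<in> I" for a
  proof (rule sinv_eq[OF IS gI[OF a] gI[OF invI[OF a]]])
    have "m (m (g a) (g (pinv a))) (g a) = g (pmult (pmult a (pinv a)) a)"
      using homI a invI pI by simp
    also have "\<dots> = g a" by (simp add: pmult_pinv1[OF injI[OF a]] pmult_idm_left)
    finally show "m (m (g a) (g (pinv a))) (g a) = g a" .
    have "m (m (g (pinv a)) (g a)) (g (pinv a)) = g (pmult (pmult (pinv a) a) (pinv a))"
      using homI a invI pI by simp
    also have "\<dots> = g (pinv a)" by (simp add: pmult_pinv2 pmult_idm_left dom_pinv)
    finally show "m (m (g (pinv a)) (g a)) (g (pinv a)) = g (pinv a)" .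
  qed
  define Id where "Id = {idm Y | Y. Y \<subseteq> X \<and> finite Y \<and> card Y \<le> n}"
  define E where "E = g ` Id"
  have IdI: "Id \<subseteq> I" by (auto simp: Id_def I_def intro: idm_in)
  have domId: "\<And>a. a \<in> I \<Longrightarrow> idm (dom a) \<in> Id"
  proof -
    fix a assume a: "a \<in> I"
    then have "dom a \<subseteq> X" "finite (ran a)" "card (ran a) \<le> n" "inj_on a (dom a)"
      by (auto simp: I_def I_rank_def partial_inj_def)
    then have "dom a \<subseteq> X" "finite (dom a)" "card (dom a) \<le> n"
      by (simp_all add: finite_dom_ran card_dom_ran)
    then show "idm (dom a) \<in> Id" unfolding Id_def by blast
  qed
  have ranId: "\<And>a. a \<in> I \<Longrightarrow> idm (ran a) \<in> Id"
  proof -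
    fix a assume a: "a \<in> I"
    then have "ran a \<subseteq> X" "finite (ran a)" "card (ran a) \<le> n"
      by (auto simp: I_def I_rank_def partial_inj_def)
    then show "idm (ran a) \<in> Id" unfolding Id_def by blast
  qed
  have EU: "E \<subseteq> U" using IdI gI by (auto simp: E_def)
  have Emult: "m (g (idm Y)) (g (idm Z)) = g (idm (Y \<inter> Z))" if "idm Y \<in> Id" "idm Z \<in> Id" for Y Z
  proof -
    have "idm Y \<in> I" "idm Z \<in> I" using that IdI by auto
    then have "g (pmult (idm Y) (idm Z)) = m (g (idm Y)) (g (idm Z))" by (rule homI)
    then show ?thesis by (simp add: pmult_idm_idm)
  qed
  have IdY: "idm Y \<in> Id \<Longrightarrow> Y \<subseteq> X \<and> finite Y \<and> card Y \<le> n" for Y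
  proof -
    assume "idm Y \<in> Id"
    then obtain Y' where "idm Y = idm Y'" "Y' \<subseteq> X \<and> finite Y' \<and> card Y' \<le> n" by (auto simp: Id_def)
    moreover have "Y = Y'" using arg_cong[OF \<open>idm Y = idm Y'\<close>, of dom] by simp
    ultimately show ?thesis by simp
  qed
  have IdInt: "idm Y \<in> Id \<Longrightarrow> idm (Y \<inter> Z) \<in> Id" for Y Z
  proof -
    assume "idm Y \<in> Id"
    then have "Y \<subseteq> X" "finite Y" "card Y \<le> n" using IdY by auto
    moreover have "card (Y \<inter> Z) \<le> card Y" using \<open>finite Y\<close> by (intro card_mono) auto
    ultimately show ?thesis unfolding Id_def by auto
  qed
  have Ecl: "T closure_of E \<subseteq> E"
  proof (rule semilattice_closed[OF T EU, where N = "2 ^ n"])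
    fix c d assume c: "c \<in> E" and d: "d \<in> E"
    then obtain Y Z where cY: "c = g (idm Y)" "idm Y \<in> Id" and dZ: "d = g (idm Z)" "idm Z \<in> Id"
      by (auto simp: E_def Id_def)
    have "m c d = g (idm (Y \<inter> Z))" using Emult cY dZ by simp
    moreover have "m d c = g (idm (Y \<inter> Z))" using Emult cY dZ by (simp add: Int_commute)
    moreover have "g (idm (Y \<inter> Z)) \<in> E" using IdInt cY by (simp add: E_def)
    ultimately show "m c d \<in> E \<and> m c d = m d c" by simp
  next
    fix c assume c: "c \<in> E"
    then obtain Y where cY: "c = g (idm Y)" "idm Y \<in> Id" by (auto simp: E_def Id_def)
    then show "m c c = c" using Emult by simp
  next
    fix c assume c: "c \<in> E"
    then obtain Y where cY: "c = g (idm Y)" "idm Y \<in> Id" by (auto simp: E_def Id_def)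
    have Yp: "Y \<subseteq> X" "finite Y" "card Y \<le> n" using IdY cY by auto
    have sub: "{d\<in>E. m d c = d} \<subseteq> g ` idm ` Pow Y"
    proof
      fix d assume "d \<in> {d\<in>E. m d c = d}"
      then have dE: "d \<in> E" and dd: "m d c = d" by auto
      then obtain Z where dZ: "d = g (idm Z)" "idm Z \<in> Id" by (auto simp: E_def Id_def)
      have "d = g (idm (Z \<inter> Y))" using dd Emult[OF dZ(2) cY(2)] dZ cY by simp
      then show "d \<in> g ` idm ` Pow Y" by blast
    qed
    have fin: "finite (g ` idm ` Pow Y)" using Yp by simp
    have "card (g ` idm ` Pow Y) \<le> card (Pow Y)"
      by (metis card_image_le finite_Pow_iff Yp(2) finite_imageI le_trans)
    also have "\<dots> = 2 ^ card Y" using Yp by (simp add: card_Pow)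
    also have "\<dots> \<le> 2 ^ n" using Yp by simp
    finally show "finite {d\<in>E. m d c = d} \<and> card {d\<in>E. m d c = d} \<le> 2 ^ n"
      using card_mono[OF fin sub] finite_subset[OF sub fin] by simp
  qed
  have phic: "continuous_map T T (\<lambda>y. m y (sinv U m y))"
    by (rule cont_mult_pair[OF cm continuous_map_id[unfolded id_def] ci])
  have psic: "continuous_map T T (\<lambda>y. m (sinv U m y) y)"
    by (rule cont_mult_pair[OF cm ci continuous_map_id[unfolded id_def]])
  have sub_cl: "T closure_of (g ` I) \<subseteq> g ` I"
  proof
    fix x assume x: "x \<in> T closure_of (g ` I)"
    have xU: "x \<in> U" using x top in_closure_of by fast
    define x' where "x' = sinv U m x"
    have x'p: "x' \<in> U" "m (m x x') x = x" "m (m x' x) x' = x'"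
      using sinv_props[OF IS xU] by (simp_all add: x'_def)
    have phiE: "(\<lambda>y. m y (sinv U m y)) ` (g ` I) \<subseteq> E"
    proof
      fix z assume "z \<in> (\<lambda>y. m y (sinv U m y)) ` (g ` I)"
      then obtain a where a: "a \<in> I" "z = m (g a) (sinv U m (g a))" by auto
      then have "z = g (pmult a (pinv a))" using sg homI invI by simp
      then have "z = g (idm (dom a))" using pmult_pinv1[OF injI[OF a(1)]] by simp
      then show "z \<in> E" using domId[OF a(1)] by (simp add: E_def)
    qed
    have "m x x' \<in> T closure_of E"
      using continuous_map_image_closure_subset[OF phic, of "g ` I"] closure_of_mono[OF phiE] x
      by (auto simp: x'_def)
    then have "m x x' \<in> E" using Ecl by blast
    then obtain Y where Y: "m x x' = g (idm Y)" "idm Y \<in> Id" by (auto simp: E_def Id_def)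
    have psiE: "(\<lambda>y. m (sinv U m y) y) ` (g ` I) \<subseteq> E"
    proof
      fix z assume "z \<in> (\<lambda>y. m (sinv U m y) y) ` (g ` I)"
      then obtain a where a: "a \<in> I" "z = m (sinv U m (g a)) (g a)" by auto
      then have "z = g (pmult (pinv a) a)" using sg homI invI by simp
      then have "z = g (idm (ran a))" unfolding pmult_pinv2 .
      then show "z \<in> E" using ranId[OF a(1)] by (simp add: E_def)
    qed
    have "m x' x \<in> T closure_of E"
      using continuous_map_image_closure_subset[OF psic, of "g ` I"] closure_of_mono[OF psiE] x
      by (auto simp: x'_def)
    then have "m x' x \<in> E" using Ecl by blast
    then obtain Z where Z: "m x' x = g (idm Z)" "idm Z \<in> Id" by (auto simp: E_def Id_def)
    have YI: "idm Y \<in> I" "idm Z \<in> I" using Y Z IdI by auto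
    have gYU: "g (idm Y) \<in> topspace T" "g (idm Z) \<in> topspace T" using gI YI top by auto
    define psi where "psi = (\<lambda>y. m (m (g (idm Y)) y) (g (idm Z)))"
    have psicont: "continuous_map T T psi" unfolding psi_def
      by (intro cont_mult_pair[OF cm] continuous_map_id[unfolded id_def]) (simp_all add: gYU)
    define F where "F = {b \<in> I. dom b \<subseteq> Y \<and> ran b \<subseteq> Z}"
    have Yf: "finite Y" "finite Z" using IdY Y Z by auto
    have Ff: "finite F" using finite_maps_sub[OF Yf] by (rule finite_subset[rotated]) (auto simp: F_def)
    have psiF: "psi ` (g ` I) \<subseteq> g ` F"
    proof
      fix z assume "z \<in> psi ` (g ` I)"
      then obtain a where a: "a \<in> I" "z = psi (g a)" by auto
      have "z = g (pmult (pmult (idm Y) a) (idm Z))"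
        using a homI pI YI by (simp add: psi_def)
      moreover have "pmult (pmult (idm Y) a) (idm Z) \<in> F"
        unfolding F_def using pI[OF pI[OF YI(1) a(1)] YI(2)] sw_dom[of Y a "idm Z"] sw_ran[of "pmult (idm Y) a" Z]
        by (intro CollectI conjI)
      ultimately show "z \<in> g ` F" by blast
    qed
    have psix: "psi x = x"
    proof -
      have "psi x = m (m (m x x') x) (m x' x)" using Y Z by (simp add: psi_def)
      also have "\<dots> = m x (m x' x)" using x'p by simp
      also have "\<dots> = m (m x x') x" using assoc[OF xU x'p(1) xU] by simp
      also have "\<dots> = x" using x'p by simp
      finally show ?thesis .
    qed
    have gFT: "g ` F \<subseteq> topspace T" using gI top by (auto simp: F_def)
    have clF: "closedin T (g ` F)" using closedin_Hausdorff_finite[OF H gFT] Ff by simp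
    have "psi x \<in> T closure_of (g ` F)"
      using continuous_map_image_closure_subset[OF psicont, of "g ` I"] closure_of_mono[OF psiF] x
      by blast
    then have "x \<in> g ` F" using psix closure_of_closedin[OF clF] by simp
    then show "x \<in> g ` I" by (auto simp: F_def)
  qed
  have "g ` I \<subseteq> topspace T" using gI top by auto
  then show ?thesis using sub_cl closure_of_subset_eq unfolding I_def by blast
qed



lemma hom_sinv:
  assumes IS: "inverse_semigroup U m"
    and gU: "g ` I_rank X n \<subseteq> U"
    and hom: "\<And>x y. x \<in> I_rank X n \<Longrightarrow> y \<in> I_rank X n \<Longrightarrow> g (pmult x y) = m (g x) (g y)"
    and a: "a \<in> I_rank X n"
  shows "sinv U m (g a) = g (pinv a)"
proof -
  have ia: "pinv a \<in> I_rank X n" using a by (rule pinv_in)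
  have inj: "inj_on a (dom a)" using a by (simp add: I_rank_def partial_inj_def)
  have U1: "g a \<in> U" "g (pinv a) \<in> U" using gU a ia by auto
  show ?thesis
  proof (rule sinv_eq[OF IS U1])
    have "m (m (g a) (g (pinv a))) (g a) = g (pmult (pmult a (pinv a)) a)"
      using hom a ia pmult_in[of _ X n] by simp
    also have "\<dots> = g a" by (simp add: pmult_pinv1[OF inj] pmult_idm_left)
    finally show "m (m (g a) (g (pinv a))) (g a) = g a" .
    have "m (m (g (pinv a)) (g a)) (g (pinv a)) = g (pmult (pmult (pinv a) a) (pinv a))"
      using hom a ia pmult_in[of _ X n] by simp
    also have "\<dots> = g (pinv a)" by (simp add: pmult_pinv2 pmult_idm_left dom_pinv)
    finally show "m (m (g (pinv a)) (g a)) (g (pinv a)) = g (pinv a)" .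
  qed
qed

theorem corollary2:
  fixes X :: "'a set" and n :: nat and \<tau> :: "('a \<rightharpoonup> 'a) topology"
  assumes "X \<noteq> {}" and "n \<ge> 1"
    and "top_inv_semigroup (I_rank X n) pmult \<tau>"
  shows "\<forall>(S :: 'b set) mS TS h.
           top_inv_semigroup S mS TS \<and>
           h ` I_rank X n \<subseteq> S \<and>
           (\<forall>x\<in>I_rank X n. \<forall>y\<in>I_rank X n. h (pmult x y) = mS (h x) (h y)) \<and>
           continuous_map \<tau> TS h
           \<longrightarrow> H_closed_TIS TYPE('c) (h ` I_rank X n) mS (subtopology TS (h ` I_rank X n))"
proof (intro allI impI)
  fix S :: "'b set" and mS TS h
  assume asm: "top_inv_semigroup S mS TS \<and>
           h ` I_rank X n \<subseteq> S \<and>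
           (\<forall>x\<in>I_rank X n. \<forall>y\<in>I_rank X n. h (pmult x y) = mS (h x) (h y)) \<and>
           continuous_map \<tau> TS h"
  define I where "I = I_rank X n"
  define A where "A = h ` I"
  have TS: "top_inv_semigroup S mS TS" and hS: "h ` I \<subseteq> S"
    and hom: "\<And>x y. x \<in> I \<Longrightarrow> y \<in> I \<Longrightarrow> h (pmult x y) = mS (h x) (h y)"
    using asm by (auto simp: I_def)
  have topS: "topspace TS = S" and HS: "Hausdorff_space TS"
    and cmS: "continuous_map (prod_topology TS TS) TS (\<lambda>(x, y). mS x y)"
    and ciS: "continuous_map TS TS (sinv S mS)"
    and ISS: "inverse_semigroup S mS"
    using TS by (auto simp: top_inv_semigroup_def)
  have AS: "A \<subseteq> S" using hS by (simp add: A_def)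
  have hSR: "h ` I_rank X n \<subseteq> S" using hS by (simp add: I_def)
  have homR: "\<And>x y. x \<in> I_rank X n \<Longrightarrow> y \<in> I_rank X n \<Longrightarrow> h (pmult x y) = mS (h x) (h y)"
    using hom by (simp add: I_def)
  have sh: "\<And>a. a \<in> I \<Longrightarrow> sinv S mS (h a) = h (pinv a)"
  proof -
    fix a assume "a \<in> I"
    then have "a \<in> I_rank X n" by (simp add: I_def)
    then show "sinv S mS (h a) = h (pinv a)"
      by (intro hom_sinv[OF ISS hSR]) (simp_all add: homR)
  qed
  have pI: "\<And>a b. a \<in> I \<Longrightarrow> b \<in> I \<Longrightarrow> pmult a b \<in> I" by (simp add: I_def pmult_in)
  have invI: "\<And>a. a \<in> I \<Longrightarrow> pinv a \<in> I" by (simp add: I_def pinv_in)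
  have Amult: "\<And>x y. x \<in> A \<Longrightarrow> y \<in> A \<Longrightarrow> mS x y \<in> A"
  proof -
    fix x y assume "x \<in> A" "y \<in> A"
    then obtain a b where "a \<in> I" "b \<in> I" "x = h a" "y = h b" by (auto simp: A_def)
    then have "mS x y = h (pmult a b)" using hom by simp
    then show "mS x y \<in> A" using pI \<open>a \<in> I\<close> \<open>b \<in> I\<close> by (simp add: A_def)
  qed
  have sA: "\<And>x. x \<in> A \<Longrightarrow> sinv S mS x \<in> A"
  proof -
    fix x assume "x \<in> A"
    then obtain a where "a \<in> I" "x = h a" by (auto simp: A_def)
    then show "sinv S mS x \<in> A" using sh invI by (simp add: A_def)
  qed
  have invA: "inverse_semigroup A mS"
    unfolding inverse_semigroup_def
  proof (intro conjI ballI)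
    fix x y assume "x \<in> A" "y \<in> A" then show "mS x y \<in> A" by (rule Amult)
  next
    fix x y z assume "x \<in> A" "y \<in> A" "z \<in> A"
    then show "mS (mS x y) z = mS x (mS y z)" using ISS AS unfolding inverse_semigroup_def by blast
  next
    fix x assume xA: "x \<in> A"
    then have xS: "x \<in> S" using AS by auto
    show "\<exists>!y. y \<in> A \<and> mS (mS x y) x = x \<and> mS (mS y x) y = y"
    proof (rule ex1I[where a = "sinv S mS x"])
      show "sinv S mS x \<in> A \<and> mS (mS x (sinv S mS x)) x = x \<and> mS (mS (sinv S mS x) x) (sinv S mS x) = sinv S mS x"
        using sA[OF xA] sinv_props[OF ISS xS] by simp
    next
      fix y assume y: "y \<in> A \<and> mS (mS x y) x = x \<and> mS (mS y x) y = y"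
      then have "y \<in> S" using AS by auto
      then show "y = sinv S mS x" using sinv_eq[OF ISS xS _ ] y by (metis (no_types))
    qed
  qed
  have sAS: "\<And>x. x \<in> A \<Longrightarrow> sinv A mS x = sinv S mS x"
  proof -
    fix x assume xA: "x \<in> A"
    then have xS: "x \<in> S" using AS by auto
    have p: "mS (mS x (sinv S mS x)) x = x" "mS (mS (sinv S mS x) x) (sinv S mS x) = sinv S mS x"
      using sinv_props[OF ISS xS] by simp_all
    show "sinv A mS x = sinv S mS x" by (rule sinv_eq[OF invA xA sA[OF xA] p])
  qed
  have topA: "topspace (subtopology TS A) = A" using AS topS by auto
  have TA: "top_inv_semigroup A mS (subtopology TS A)"
    unfolding top_inv_semigroup_def
  proof (intro conjI)
    show "inverse_semigroup A mS" by (rule invA)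
    show "topspace (subtopology TS A) = A" by (rule topA)
    show "Hausdorff_space (subtopology TS A)" using HS by (rule Hausdorff_space_subtopology)
    have "continuous_map (subtopology (prod_topology TS TS) (A \<times> A)) (subtopology TS A) (\<lambda>(x, y). mS x y)"
      unfolding continuous_map_in_subtopology
    proof
      show "continuous_map (subtopology (prod_topology TS TS) (A \<times> A)) TS (\<lambda>(x, y). mS x y)"
        using cmS by (rule continuous_map_from_subtopology)
      show "(\<lambda>(x, y). mS x y) \<in> topspace (subtopology (prod_topology TS TS) (A \<times> A)) \<rightarrow> A"
        using Amult by auto
    qed
    then show "continuous_map (prod_topology (subtopology TS A) (subtopology TS A)) (subtopology TS A) (\<lambda>(x, y). mS x y)"
      by (simp add: subtopology_Times)
    have "continuous_map (subtopology TS A) (subtopology TS A) (sinv S mS)"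
      unfolding continuous_map_in_subtopology
    proof
      show "continuous_map (subtopology TS A) TS (sinv S mS)"
        using ciS by (rule continuous_map_from_subtopology)
      show "sinv S mS \<in> topspace (subtopology TS A) \<rightarrow> A" using sA topA by auto
    qed
    then show "continuous_map (subtopology TS A) (subtopology TS A) (sinv A mS)"
      by (rule continuous_map_eq) (simp add: topA sAS)
  qed
  have closedpart: "\<forall>(U :: 'c set) mU TU e.
        top_inv_semigroup U mU TU \<and> e ` A \<subseteq> U \<and> inj_on e A \<and>
        (\<forall>x\<in>A. \<forall>y\<in>A. e (mS x y) = mU (e x) (e y)) \<and>
        homeomorphic_map (subtopology TS A) (subtopology TU (e ` A)) e
        \<longrightarrow> closedin TU (e ` A)"
  proof (intro allI impI)
    fix U :: "'c set" and mU TU e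
    assume b: "top_inv_semigroup U mU TU \<and> e ` A \<subseteq> U \<and> inj_on e A \<and>
        (\<forall>x\<in>A. \<forall>y\<in>A. e (mS x y) = mU (e x) (e y)) \<and>
        homeomorphic_map (subtopology TS A) (subtopology TU (e ` A)) e"
    have TU: "top_inv_semigroup U mU TU" using b by blast
    have eA: "e ` A \<subseteq> U" using b by blast
    have eh: "\<And>x y. x \<in> A \<Longrightarrow> y \<in> A \<Longrightarrow> e (mS x y) = mU (e x) (e y)" using b by blast
    have gU: "(e \<circ> h) ` I_rank X n \<subseteq> U" using eA by (auto simp: A_def I_def)
    have ghom: "(e \<circ> h) (pmult x y) = mU ((e \<circ> h) x) ((e \<circ> h) y)"
      if "x \<in> I_rank X n" "y \<in> I_rank X n" for x y
    proof -
      have xy: "x \<in> I" "y \<in> I" using that by (simp_all add: I_def)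
      have "h x \<in> A" "h y \<in> A" using xy by (auto simp: A_def)
      then show ?thesis using hom[OF xy] eh by simp
    qed
    have "closedin TU ((e \<circ> h) ` I_rank X n)" by (rule hom_closed[OF TU gU ghom])
    then show "closedin TU (e ` A)" by (simp add: A_def I_def image_comp)
  qed
  show "H_closed_TIS TYPE('c) (h ` I_rank X n) mS (subtopology TS (h ` I_rank X n))"
    unfolding H_closed_TIS_def using TA closedpart by (simp add: A_def I_def)
qed


end
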